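(* Consider the multicast coalitional game with player set $\mathcal{N}$ and value function $$v(S)=\sum_{i\in S}U_i-\sum_{i\in S}\frac{\alpha_i}{R_S}-\frac{\beta+\gamma}{R_S},\qquad R_S=\min_{i\in S}R_i,$$ for nonempty $S\subseteq\mathcal{N}$. Let $\mathbf{P}=\{P_1,\dots,P_n\}$ be a partition of $\mathcal{N}$ into nonempty sets, with $R_{j,min}$, $R_{j,max}$ the minimum and maximum rates of users in $P_j$. Let $\alpha_{min}=\min_{i\in\mathcal{N}}\alpha_i$, $\alpha_{max}=\max_{i\in\mathcal{N}}\alpha_i$. If $$\frac{R_{j,max}}{R_{j,min}}\le\frac{2(\alpha_{min}+\beta+\gamma)}{\alpha_{max}|P_j|+\beta+\gamma}\quad\forall j\in\{1,\dots,n\},$$ then for every $\mathbf{P}$-compatible collection $\mathbf{S}=\{S_1,\dots,S_k\}$ (mutually disjoint nonempty sets with $\bigcup_{i=1}^kS_i\subseteq P_j$ for some $j$), $$v\Big(\bigcup_{i=1}^kS_i\Big)\ge\sum_{i=1}^kv(S_i).$$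
   Context: A transmitter multicasts a file of size $X>0$ bits to users $\mathcal{N}=\{1,\dots,N\}$. User $i$ has valuation $U_i\in\mathbb{R}$, downloads at rate $R_i>0$, and consumes receive power $P_{Rx,i}>0$; the transmitter transmits at power $P_{Tx}>0$. Costs per unit energy are $a>0$ at users and $b>0$ at the transmitter; bandwidth cost per second is $w>0$. Set $\alpha_i=aP_{Rx,i}X$, $\beta=bP_{Tx}X$, $\gamma=wX$. *)

theory Defs
  imports Complex_Main "HOL-Library.Disjoint_Sets"
begin

definition rate_of :: "('u \<Rightarrow> real) \<Rightarrow> 'u set \<Rightarrow> real" where
  "rate_of R S = Min (R ` S)"

text \<open>Value function of the multicast game:
  v(S) = sum U_i - sum alpha_i / R_S - (beta + gamma) / R_S,
  with alpha_i = a P_Rx,i X, beta = b P_Tx X, gamma = w X.\<close>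
definition mc_value ::
  "('u \<Rightarrow> real) \<Rightarrow> ('u \<Rightarrow> real) \<Rightarrow> ('u \<Rightarrow> real) \<Rightarrow> real \<Rightarrow> real \<Rightarrow> real \<Rightarrow> real \<Rightarrow> real
   \<Rightarrow> 'u set \<Rightarrow> real" where
  "mc_value U R PRx PTx X a b w S =
     (\<Sum>i\<in>S. U i) - (\<Sum>i\<in>S. a * PRx i * X) / rate_of R S
       - (b * PTx * X + w * X) / rate_of R S"

end

theory Submission
  imports Defs
begin

theorem lemma2:
  fixes N :: "'u set" and U R PRx :: "'u \<Rightarrow> real"
    and PTx X a b w :: real
    and P :: "'u set set" and \<S> :: "'u set set"
  assumes finN: "finite N" and neN: "N \<noteq> {}"
    and X_pos: "X > 0" and a_pos: "a > 0" and b_pos: "b > 0" and w_pos: "w > 0"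
    and PTx_pos: "PTx > 0"
    and R_pos: "\<And>i. i \<in> N \<Longrightarrow> R i > 0"
    and PRx_pos: "\<And>i. i \<in> N \<Longrightarrow> PRx i > 0"
    and part: "partition_on N P"
    and cond: "\<And>Pj. Pj \<in> P \<Longrightarrow>
        Max (R ` Pj) / Min (R ` Pj)
          \<le> 2 * (Min ((\<lambda>i. a * PRx i * X) ` N) + b * PTx * X + w * X)
             / (Max ((\<lambda>i. a * PRx i * X) ` N) * real (card Pj) + b * PTx * X + w * X)"
    and S_fin: "finite \<S>" and S_ne: "\<S> \<noteq> {}"
    and S_disj: "disjoint \<S>"
    and S_mem_ne: "\<And>S. S \<in> \<S> \<Longrightarrow> S \<noteq> {}"
    and S_compat: "\<exists>Pj\<in>P. \<Union>\<S> \<subseteq> Pj"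
  shows "mc_value U R PRx PTx X a b w (\<Union>\<S>)
           \<ge> (\<Sum>S\<in>\<S>. mc_value U R PRx PTx X a b w S)"
proof -
  define al where "al i = a * PRx i * X" for i
  define c where "c = b * PTx * X + w * X"
  define T where "T = \<Union>\<S>"
  have c_pos: "c > 0" unfolding c_def using b_pos w_pos PTx_pos X_pos by (simp add: add_pos_pos)
  have al_pos: "al i > 0" if "i \<in> N" for i
    unfolding al_def using a_pos PRx_pos[OF that] X_pos by simp
  obtain Pj where Pj: "Pj \<in> P" "T \<subseteq> Pj" using S_compat T_def by blast
  have PjN: "Pj \<subseteq> N" using part Pj(1) unfolding partition_on_def by blast
  have Pjne: "Pj \<noteq> {}" using part Pj(1) unfolding partition_on_def by blast
  have finPj: "finite Pj" using PjN finN finite_subset by blast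
  have TN: "T \<subseteq> N" using Pj PjN by blast
  have finT: "finite T" using TN finN finite_subset by blast
  have SN: "S \<subseteq> N" if "S \<in> \<S>" for S using that TN T_def by blast
  have finS: "finite S" if "S \<in> \<S>" for S using SN[OF that] finN finite_subset by blast
  have rpos: "rate_of R S > 0" if "S \<subseteq> N" "S \<noteq> {}" for S
  proof -
    have "finite S" using that finN finite_subset by blast
    then show ?thesis unfolding rate_of_def using that R_pos
      by (simp add: Min_gr_iff subset_iff)
  qed
  have mcv: "mc_value U R PRx PTx X a b w S = (\<Sum>i\<in>S. U i) - ((\<Sum>i\<in>S. al i) + c) / rate_of R S" for S
    unfolding mc_value_def al_def c_def by (simp add: add_divide_distrib)
  have disjS: "\<forall>A\<in>\<S>. \<forall>B\<in>\<S>. A \<noteq> B \<longrightarrow> A \<inter> B = {}"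
    using S_disj unfolding disjoint_def by blast
  have sumU: "(\<Sum>i\<in>T. U i) = (\<Sum>S\<in>\<S>. \<Sum>i\<in>S. U i)"
    proof -
    have "\<forall>A\<in>\<S>. finite A" using finS by blast
    from sum.Union_disjoint[OF this disjS] show ?thesis unfolding T_def by (simp only: o_def)
  qed
  have sumA: "(\<Sum>i\<in>T. al i) = (\<Sum>S\<in>\<S>. \<Sum>i\<in>S. al i)"
    proof -
    have "\<forall>A\<in>\<S>. finite A" using finS by blast
    from sum.Union_disjoint[OF this disjS] show ?thesis unfolding T_def by (simp only: o_def)
  qed
  define A where "A = (\<Sum>i\<in>T. al i)"
  have key: "(A + c) / rate_of R T \<le> (\<Sum>S\<in>\<S>. ((\<Sum>i\<in>S. al i) + c) / rate_of R S)"
  proof (cases "card \<S> = 1")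
    case True
    then obtain S where "\<S> = {S}" using card_1_singletonE by blast
    then show ?thesis unfolding A_def T_def by simp
  next
    case False
    have "card \<S> \<noteq> 0" using S_fin S_ne by simp
    with False have k2: "card \<S> \<ge> 2" by linarith
    then obtain S1 S2 where S12: "S1 \<in> \<S>" "S2 \<in> \<S>" "S1 \<noteq> S2"
    proof -
      obtain S1 where S1: "S1 \<in> \<S>" using S_ne by blast
      have cd: "card (\<S> - {S1}) = card \<S> - 1" using S1 S_fin by simp
      have "\<S> - {S1} \<noteq> {}"
      proof
        assume "\<S> - {S1} = {}"
        then have "card (\<S> - {S1}) = 0" by (simp only: card.empty)
        with cd k2 show False by linarith
      qed
      then obtain S2 where "S2 \<in> \<S> - {S1}" by blast
      then show ?thesis using S1 that by blast
    qed
    obtain x y where xy: "x \<in> S1" "y \<in> S2" using S_mem_ne S12 by blast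
    have "x \<noteq> y" using xy S12 disjS by blast
    have xyT: "{x, y} \<subseteq> T" using xy S12 T_def by blast
    define m where "m = Min (R ` Pj)"
    define M where "M = Max (R ` Pj)"
    define amin where "amin = Min (al ` N)"
    define amax where "amax = Max (al ` N)"
    have m_pos: "m > 0" unfolding m_def using finPj Pjne PjN R_pos by (simp add: Min_gr_iff subset_iff)
    have Tne: "T \<noteq> {}" using xyT by blast
    have mT: "m \<le> rate_of R T" unfolding m_def rate_of_def
      using finPj finT Tne Pj(2) by (intro Min_antimono) auto
    have rSM: "rate_of R S \<le> M" if SS: "S \<in> \<S>" for S
    proof -
      have sub: "S \<subseteq> Pj" using that Pj(2) T_def by blast
      have fS: "finite S" using finS[OF that] .
      obtain x where x: "x \<in> S" using S_mem_ne[OF SS] by blast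
      have "Min (R ` S) \<le> R x" using x fS by simp
      also have "R x \<le> Max (R ` Pj)" using x sub finPj by auto
      finally show ?thesis unfolding M_def rate_of_def .
    qed
    have M_pos: "M > 0" using rSM[OF S12(1)] rpos[OF SN[OF S12(1)] S_mem_ne[OF S12(1)]]
      by (metis less_le_trans)
    have amin_le: "amin \<le> al i" if "i \<in> N" for i unfolding amin_def using finN that by simp
    have amax_ge: "al i \<le> amax" if "i \<in> N" for i unfolding amax_def using finN that by simp
    have Aup: "A \<le> amax * real (card Pj)"
    proof -
      have "A \<le> (\<Sum>i\<in>T. amax)" unfolding A_def using TN amax_ge by (intro sum_mono) auto
      also have "\<dots> = real (card T) * amax" by simp
      also have "\<dots> \<le> real (card Pj) * amax"
      proof (rule mult_right_mono)
        show "real (card T) \<le> real (card Pj)" using card_mono[OF finPj Pj(2)] by simp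
        show "0 \<le> amax" using amax_ge al_pos neN by (meson ex_in_conv less_le_trans less_imp_le)
      qed
      finally show ?thesis by (simp add: mult.commute)
    qed
    have Alow: "2 * amin \<le> A"
    proof -
      have "A \<ge> (\<Sum>i\<in>{x,y}. al i)" unfolding A_def
        using xyT finT TN al_pos by (intro sum_mono2) (auto intro: less_imp_le)
      moreover have "(\<Sum>i\<in>{x,y}. al i) = al x + al y" using \<open>x \<noteq> y\<close> by simp
      moreover have "amin \<le> al x" "amin \<le> al y" using xyT TN amin_le by auto
      ultimately show ?thesis by linarith
    qed
    have condj: "M / m \<le> 2 * (amin + c) / (amax * real (card Pj) + c)"
      using cond[OF Pj(1)] unfolding M_def m_def amin_def amax_def al_def c_def by (simp add: add.assoc)
    have A0: "A \<ge> 0" unfolding A_def using TN al_pos by (intro sum_nonneg) (auto intro: less_imp_le)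
    then have den_pos: "amax * real (card Pj) + c > 0" using Aup c_pos by linarith
    have c1: "M * (amax * real (card Pj) + c) \<le> 2 * m * (amin + c)"
      using condj m_pos den_pos by (simp add: field_simps)
    have c2: "M * (A + c) \<le> m * (A + 2 * c)"
    proof -
      have "M * (A + c) \<le> M * (amax * real (card Pj) + c)" using Aup M_pos by simp
      also have "\<dots> \<le> 2 * m * (amin + c)" by (rule c1)
      also have "\<dots> \<le> m * (A + 2 * c)" using Alow m_pos by (simp add: field_simps)
      finally show ?thesis .
    qed
    have "(A + c) / rate_of R T \<le> (A + c) / m"
      using mT m_pos A0 c_pos by (intro divide_left_mono) auto
    also have "\<dots> \<le> (A + 2 * c) / M" using c2 m_pos M_pos by (simp add: field_simps)
    also have "\<dots> \<le> (A + real (card \<S>) * c) / M"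
      using k2 c_pos M_pos by (intro divide_right_mono) (auto intro!: mult_right_mono)
    also have "\<dots> = (\<Sum>S\<in>\<S>. ((\<Sum>i\<in>S. al i) + c) / M)"
      unfolding A_def sumA by (simp add: sum.distrib sum_divide_distrib[symmetric] add_divide_distrib[symmetric])
    also have "\<dots> \<le> (\<Sum>S\<in>\<S>. ((\<Sum>i\<in>S. al i) + c) / rate_of R S)"
    proof (rule sum_mono)
      fix S assume S: "S \<in> \<S>"
      have "0 \<le> (\<Sum>i\<in>S. al i) + c" using SN[OF S] al_pos c_pos
        by (intro add_nonneg_nonneg sum_nonneg) (auto intro: less_imp_le)
      then show "((\<Sum>i\<in>S. al i) + c) / M \<le> ((\<Sum>i\<in>S. al i) + c) / rate_of R S"
        using rSM[OF S] rpos[OF SN[OF S] S_mem_ne[OF S]] by (intro divide_left_mono) auto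
    qed
    finally show ?thesis .
  qed
  have "(\<Sum>S\<in>\<S>. mc_value U R PRx PTx X a b w S)
      = (\<Sum>i\<in>T. U i) - (\<Sum>S\<in>\<S>. ((\<Sum>i\<in>S. al i) + c) / rate_of R S)"
    unfolding mcv sumU by (simp add: sum_subtractf)
  also have "\<dots> \<le> (\<Sum>i\<in>T. U i) - (A + c) / rate_of R T" using key by simp
  also have "\<dots> = mc_value U R PRx PTx X a b w (\<Union>\<S>)" unfolding mcv A_def T_def ..
  finally show ?thesis .
qed

end
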